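(* Let $n\ge 1$, $M\ge1$ be integers and $a=(a_0,\dots,a_n)\in\mathbb{Z}^{n+1}$ with $0\le a_i\le M$ and $a_0=a_n=0$. If there exists a non-periodic real-valued tropical recurrent minimal sequence satisfying $a$, then there exists a non-periodic tropical recurrent sequence satisfying $a$ all of whose entries lie in $V=\{j+i/(2n+2): 0\le j<M,\ 0\le i\le 2n+2,\ i,j\in\mathbb{Z}\}$.
   Context: A tropical recurrent sequence is $y=(y_j)_{j\in\mathbb{Z}}$ with real entries; it satisfies $a$ if for every $k\in\mathbb{Z}$ the minimum $\min_{0\le i\le n}\{a_i+y_{i+k}\}$ is attained for at least two different indices $i$; it is minimal if for every $j\in\mathbb{Z}$ there is $k$ with $j-n\le k\le j$ and $a_{j-k}+y_j=\min_{0\le i\le n}\{a_i+y_{i+k}\}$. It is periodic if there is $d\ge1$ with $y_{j+d}=y_j$ for all $j$, and non-periodic otherwise. *)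

theory Defs
  imports Complex_Main
begin

text \<open>Coefficient vector a = (a_0,...,a_n) is given as a function a :: nat => int,
  only the values a 0, ..., a n matter. Sequences are y :: int => real.\<close>

definition trop_min :: "nat \<Rightarrow> (nat \<Rightarrow> int) \<Rightarrow> (int \<Rightarrow> real) \<Rightarrow> int \<Rightarrow> real" where
  "trop_min n a y k = Min ((\<lambda>i. real_of_int (a i) + y (int i + k)) ` {0..n})"

definition trop_satisfies :: "nat \<Rightarrow> (nat \<Rightarrow> int) \<Rightarrow> (int \<Rightarrow> real) \<Rightarrow> bool" where
  "trop_satisfies n a y \<longleftrightarrow>
     (\<forall>k::int. \<exists>i1 i2. i1 \<le> n \<and> i2 \<le> n \<and> i1 \<noteq> i2 \<and>
        real_of_int (a i1) + y (int i1 + k) = trop_min n a y k \<and>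
        real_of_int (a i2) + y (int i2 + k) = trop_min n a y k)"

definition trop_minimal :: "nat \<Rightarrow> (nat \<Rightarrow> int) \<Rightarrow> (int \<Rightarrow> real) \<Rightarrow> bool" where
  "trop_minimal n a y \<longleftrightarrow>
     (\<forall>j::int. \<exists>k::int. j - int n \<le> k \<and> k \<le> j \<and>
        real_of_int (a (nat (j - k))) + y j = trop_min n a y k)"

definition periodic_seq :: "(int \<Rightarrow> real) \<Rightarrow> bool" where
  "periodic_seq y \<longleftrightarrow> (\<exists>d::int. d \<ge> 1 \<and> (\<forall>j. y (j + d) = y j))"

end

theory Submission
  imports Defs
begin

lemma tmin_le: "i \<le> n \<Longrightarrow> trop_min n a y k \<le> real_of_int (a i) + y (int i + k)"
  unfolding trop_min_def by (rule Min_le) auto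

lemma sat_comp:
  assumes m: "mono \<phi>" and c: "\<And>i x. i \<le> n \<Longrightarrow> \<phi> (real_of_int (a i) + x) = real_of_int (a i) + \<phi> x"
    and s: "trop_satisfies n a y"
  shows "trop_satisfies n a (\<lambda>j. \<phi> (y j))"
proof -
  have tm: "trop_min n a (\<lambda>j. \<phi> (y j)) k = \<phi> (trop_min n a y k)" for k
  proof -
    have "(\<lambda>i. real_of_int (a i) + \<phi> (y (int i + k))) ` {0..n}
        = \<phi> ` ((\<lambda>i. real_of_int (a i) + y (int i + k)) ` {0..n})"
      using c by (auto simp: image_iff) (metis c atLeastAtMost_iff zero_le)+
    then show ?thesis unfolding trop_min_def
      by (simp add: mono_Min_commute[OF m])
  qed
  show ?thesis unfolding trop_satisfies_def
  proof
    fix k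
    obtain i1 i2 where "i1 \<le> n" "i2 \<le> n" "i1 \<noteq> i2"
      "real_of_int (a i1) + y (int i1 + k) = trop_min n a y k"
      "real_of_int (a i2) + y (int i2 + k) = trop_min n a y k"
      using s unfolding trop_satisfies_def by blast
    then show "\<exists>i1 i2. i1 \<le> n \<and> i2 \<le> n \<and> i1 \<noteq> i2 \<and>
        real_of_int (a i1) + \<phi> (y (int i1 + k)) = trop_min n a (\<lambda>j. \<phi> (y j)) k \<and>
        real_of_int (a i2) + \<phi> (y (int i2 + k)) = trop_min n a (\<lambda>j. \<phi> (y j)) k"
      by (intro exI[of _ i1] exI[of _ i2]) (simp add: tm c[symmetric])
  qed
qed

lemma sat_shift:
  assumes "trop_satisfies n a y"
  shows "trop_satisfies n a (\<lambda>j. y (j + d))"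
proof -
  have "trop_min n a (\<lambda>j. y (j + d)) k = trop_min n a y (k + d)" for k
    unfolding trop_min_def by (simp add: add.assoc)
  then show ?thesis using assms unfolding trop_satisfies_def
    by (metis (no_types, lifting) add.assoc)
qed

lemma sat_splice:
  assumes u: "trop_satisfies n a u" and v: "trop_satisfies n a v"
    and ag: "\<And>i. i < n \<Longrightarrow> u (p + int i) = v (p + int i)"
  shows "trop_satisfies n a (\<lambda>j. if j < p then u j else v j)"
  unfolding trop_satisfies_def
proof
  fix k
  let ?s = "\<lambda>j. if j < p then u j else v j"
  show "\<exists>i1 i2. i1 \<le> n \<and> i2 \<le> n \<and> i1 \<noteq> i2 \<and>
        real_of_int (a i1) + ?s (int i1 + k) = trop_min n a ?s k \<and>
        real_of_int (a i2) + ?s (int i2 + k) = trop_min n a ?s k"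
  proof (cases "k < p")
    case True
    have e: "?s (int i + k) = u (int i + k)" if "i \<le> n" for i
    proof (cases "int i + k < p")
      case False
      then have "nat (int i + k - p) < n" using True that by auto
      from ag[OF this] False show ?thesis by simp
    qed simp
    have "trop_min n a ?s k = trop_min n a u k"
      unfolding trop_min_def by (intro arg_cong[where f=Min] image_cong) (auto simp: e)
    moreover obtain i1 i2 where "i1 \<le> n" "i2 \<le> n" "i1 \<noteq> i2"
      "real_of_int (a i1) + u (int i1 + k) = trop_min n a u k"
      "real_of_int (a i2) + u (int i2 + k) = trop_min n a u k"
      using u unfolding trop_satisfies_def by blast
    ultimately show ?thesis by (intro exI[of _ i1] exI[of _ i2]) (simp add: e)
  next
    case False
    have e: "?s (int i + k) = v (int i + k)" if "i \<le> n" for i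
      using False by simp
    have "trop_min n a ?s k = trop_min n a v k"
      unfolding trop_min_def by (intro arg_cong[where f=Min] image_cong) (auto simp: e)
    moreover obtain i1 i2 where "i1 \<le> n" "i2 \<le> n" "i1 \<noteq> i2"
      "real_of_int (a i1) + v (int i1 + k) = trop_min n a v k"
      "real_of_int (a i2) + v (int i2 + k) = trop_min n a v k"
      using v unfolding trop_satisfies_def by blast
    ultimately show ?thesis by (intro exI[of _ i1] exI[of _ i2]) (simp add: e)
  qed
qed

lemma periodic_mult:
  assumes "\<forall>j. y (j + d) = y j"
  shows "y (j + int m * d) = y j"
proof (induction m)
  case (Suc m)
  then show ?case using assms[rule_format, of "j + int m * d"] by (simp add: algebra_simps)
qed simp

lemma periodic_eq:
  assumes "periodic_seq w1" "periodic_seq w2"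
    and ag: "(\<forall>j<p. w1 j = w2 j) \<or> (\<forall>j\<ge>p. w1 j = w2 j)"
  shows "w1 j = w2 j"
proof -
  obtain d1 d2 where d: "d1 \<ge> 1" "d2 \<ge> 1" "\<forall>j. w1 (j + d1) = w1 j" "\<forall>j. w2 (j + d2) = w2 j"
    using assms(1,2) unfolding periodic_seq_def by blast
  define D where "D = d1 * d2"
  have D1: "D \<ge> 1" using mult_mono[of 1 d1 1 d2] d unfolding D_def by simp
  have p1: "w1 (x + int m * D) = w1 x" for x m
    using periodic_mult[OF d(3), of x "m * nat d2"] d unfolding D_def by (simp add: algebra_simps)
  have p2: "w2 (x + int m * D) = w2 x" for x m
    using periodic_mult[OF d(4), of x "m * nat d1"] d unfolding D_def by (simp add: algebra_simps)
  define m where "m = nat \<bar>j - p\<bar> + 1"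
  have mD: "int m * D \<ge> int m" using mult_left_mono[OF D1, of "int m"] by simp
  have mm: "int m > \<bar>j - p\<bar>" unfolding m_def by simp
  from ag show ?thesis
  proof
    assume h: "\<forall>j<p. w1 j = w2 j"
    have "j - int m * D < p" using mD mm by linarith
    then have "w1 (j - int m * D) = w2 (j - int m * D)" using h by blast
    then show ?thesis using p1[of "j - int m * D" m] p2[of "j - int m * D" m] by simp
  next
    assume h: "\<forall>j\<ge>p. w1 j = w2 j"
    have "j + int m * D \<ge> p" using mD mm by linarith
    then have "w1 (j + int m * D) = w2 (j + int m * D)" using h by blast
    then show ?thesis using p1[of j m] p2[of j m] by simp
  qed
qed

definition rnd :: "nat \<Rightarrow> (int \<Rightarrow> real) \<Rightarrow> real \<Rightarrow> real" where
  "rnd n y x = Max ((\<lambda>i. y (int i) + real_of_int \<lfloor>x - y (int i)\<rfloor>) ` {..<n})"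

lemma rnd_fin: "n \<ge> 1 \<Longrightarrow> finite ((\<lambda>i. y (int i) + real_of_int \<lfloor>x - y (int i)\<rfloor>) ` {..<n})
   \<and> (\<lambda>i. y (int i) + real_of_int \<lfloor>x - y (int i)\<rfloor>) ` {..<n} \<noteq> {}"
  by (auto simp: lessThan_empty_iff)

lemma rnd_le: "n \<ge> 1 \<Longrightarrow> rnd n y x \<le> x"
  unfolding rnd_def using rnd_fin[of n y x]
  by (subst Max_le_iff) (auto, linarith)

lemma rnd_fix: "n \<ge> 1 \<Longrightarrow> i < n \<Longrightarrow> rnd n y (y (int i)) = y (int i)"
proof (rule antisym)
  assume "n \<ge> 1" "i < n"
  then show "rnd n y (y (int i)) \<le> y (int i)" by (simp add: rnd_le)
  show "y (int i) \<le> rnd n y (y (int i))" unfolding rnd_def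
    using rnd_fin[of n y "y (int i)"] \<open>i < n\<close> \<open>n \<ge> 1\<close>
    by (intro Max_ge) (auto intro!: image_eqI[of _ _ i])
qed

lemma rnd_mono: "n \<ge> 1 \<Longrightarrow> mono (rnd n y)"
proof (rule monoI)
  fix x x' :: real assume n: "n \<ge> 1" and "x \<le> x'"
  show "rnd n y x \<le> rnd n y x'" unfolding rnd_def
  proof (rule Max.boundedI)
    show "finite ((\<lambda>i. y (int i) + real_of_int \<lfloor>x - y (int i)\<rfloor>) ` {..<n})"
      "(\<lambda>i. y (int i) + real_of_int \<lfloor>x - y (int i)\<rfloor>) ` {..<n} \<noteq> {}" using rnd_fin[OF n] by auto
    fix t assume "t \<in> (\<lambda>i. y (int i) + real_of_int \<lfloor>x - y (int i)\<rfloor>) ` {..<n}"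
    then obtain i where i: "i < n" "t = y (int i) + real_of_int \<lfloor>x - y (int i)\<rfloor>" by auto
    have "t \<le> y (int i) + real_of_int \<lfloor>x' - y (int i)\<rfloor>"
      using i \<open>x \<le> x'\<close> by (simp add: floor_mono)
    also have "\<dots> \<le> Max ((\<lambda>i. y (int i) + real_of_int \<lfloor>x' - y (int i)\<rfloor>) ` {..<n})"
      using rnd_fin[OF n, of y x'] i by (intro Max_ge) auto
    finally show "t \<le> Max ((\<lambda>i. y (int i) + real_of_int \<lfloor>x' - y (int i)\<rfloor>) ` {..<n})" .
  qed
qed

lemma rnd_add: "n \<ge> 1 \<Longrightarrow> rnd n y (real_of_int z + x) = real_of_int z + rnd n y x"
proof -
  assume n: "n \<ge> 1"
  have "(\<lambda>i. y (int i) + real_of_int \<lfloor>real_of_int z + x - y (int i)\<rfloor>) ` {..<n}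
     = (\<lambda>t. real_of_int z + t) ` ((\<lambda>i. y (int i) + real_of_int \<lfloor>x - y (int i)\<rfloor>) ` {..<n})"
  proof -
    have "\<lfloor>real_of_int z + x - y (int i)\<rfloor> = z + \<lfloor>x - y (int i)\<rfloor>" for i
      using floor_add_int[of "x - y (int i)" z] by (simp add: algebra_simps)
    then show ?thesis by (auto simp: image_image algebra_simps)
  qed
  moreover have "mono (\<lambda>t. real_of_int z + t)" by (simp add: mono_def)
  ultimately show ?thesis unfolding rnd_def using rnd_fin[OF n, of y x]
    by (simp add: mono_Max_commute)
qed

lemma rnd_eq: "n \<ge> 1 \<Longrightarrow> rnd n y x = x \<Longrightarrow> \<exists>i<n. \<exists>z. x = y (int i) + real_of_int z"
proof -
  assume n: "n \<ge> 1" and e: "rnd n y x = x"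
  have "rnd n y x \<in> (\<lambda>i. y (int i) + real_of_int \<lfloor>x - y (int i)\<rfloor>) ` {..<n}"
    unfolding rnd_def using rnd_fin[OF n, of y x] by (intro Max_in) auto
  then obtain i where "i < n" "x = y (int i) + real_of_int \<lfloor>x - y (int i)\<rfloor>" using e by auto
  then show ?thesis by blast
qed

locale tr =
  fixes n M :: nat and a :: "nat \<Rightarrow> int"
  assumes n1: "n \<ge> 1" and M1: "M \<ge> 1"
    and aM: "\<forall>i\<le>n. 0 \<le> a i \<and> a i \<le> int M"
    and a0: "a 0 = 0" and an: "a n = 0"
begin

lemma step_right:
  assumes "trop_satisfies n a y"
  shows "\<exists>i<n. y (k + int i) \<le> y (k + int n)"
proof -
  obtain i1 i2 where "i1 \<le> n" "i2 \<le> n" "i1 \<noteq> i2"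
    "real_of_int (a i1) + y (int i1 + k) = trop_min n a y k"
    "real_of_int (a i2) + y (int i2 + k) = trop_min n a y k"
    using assms unfolding trop_satisfies_def by blast
  then obtain i where i: "i < n" "real_of_int (a i) + y (int i + k) = trop_min n a y k"
    by (metis le_neq_implies_less)
  have "trop_min n a y k \<le> real_of_int (a n) + y (int n + k)" by (rule tmin_le) simp
  moreover have "a i \<ge> 0" using aM i by auto
  ultimately show ?thesis using i an by (intro exI[of _ i]) (simp add: add.commute)
qed

lemma step_left:
  assumes "trop_satisfies n a y"
  shows "\<exists>i. 1 \<le> i \<and> i \<le> n \<and> y (k + int i) \<le> y k"
proof -
  obtain i1 i2 where "i1 \<le> n" "i2 \<le> n" "i1 \<noteq> i2"
    "real_of_int (a i1) + y (int i1 + k) = trop_min n a y k"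
    "real_of_int (a i2) + y (int i2 + k) = trop_min n a y k"
    using assms unfolding trop_satisfies_def by blast
  then obtain i where i: "1 \<le> i" "i \<le> n" "real_of_int (a i) + y (int i + k) = trop_min n a y k"
    by (metis less_one not_le)
  have "trop_min n a y k \<le> real_of_int (a 0) + y (int 0 + k)" by (rule tmin_le) simp
  moreover have "a i \<ge> 0" using aM i by auto
  ultimately show ?thesis using i a0 by (intro exI[of _ i]) (simp add: add.commute)
qed

lemma block_min:
  assumes s: "trop_satisfies n a y"
  shows "\<exists>i<n. \<forall>j. y (p + int i) \<le> y j"
proof -
  let ?B = "(\<lambda>i. y (p + int i)) ` {..<n}"
  have fin: "finite ?B" "?B \<noteq> {}" using n1 by (auto simp: lessThan_empty_iff)
  obtain i0 where i0: "i0 < n" "Min ?B = y (p + int i0)" using Min_in[OF fin] by auto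
  have bl: "y (p + int i0) \<le> y (p + int i)" if "i < n" for i
    using Min_le[OF fin(1)] that i0 by auto
  have R: "y (p + int i0) \<le> y (p + int m)" for m
  proof (induction m rule: less_induct)
    case (less m)
    show ?case
    proof (cases "m < n")
      case True then show ?thesis using bl by simp
    next
      case False
      obtain i where i: "i < n" "y (p + int (m - n) + int i) \<le> y (p + int (m - n) + int n)"
        using step_right[OF s, of "p + int (m - n)"] by blast
      have "m - n + i < m" using i False by simp
      then have "y (p + int i0) \<le> y (p + int (m - n + i))" by (rule less.IH)
      moreover have "p + int (m - n + i) = p + int (m - n) + int i" using False by simp
      ultimately have "y (p + int i0) \<le> y (p + int (m - n) + int i)" by (simp only:)
      moreover have "p + int (m - n) + int n = p + int m" using False by simp
      ultimately show ?thesis using i by (simp add: add.assoc)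
    qed
  qed
  have Lf: "y (p + int i0) \<le> y (p - int m)" for m
  proof (induction m rule: less_induct)
    case (less m)
    show ?case
    proof (cases "m = 0")
      case True then show ?thesis using bl[of 0] n1 by simp
    next
      case False
      obtain i where i: "1 \<le> i" "i \<le> n" "y (p - int m + int i) \<le> y (p - int m)"
        using step_left[OF s, of "p - int m"] by blast
      show ?thesis
      proof (cases "i \<le> m")
        case True
        have "m - i < m" using i False by simp
        then have "y (p + int i0) \<le> y (p - int (m - i))" by (rule less.IH)
        moreover have "p - int (m - i) = p - int m + int i" using True by simp
        ultimately show ?thesis using i(3) by (metis order_trans)
      next
        case F2: False
        have "y (p + int i0) \<le> y (p + int (i - m))" using bl[of "i - m"] F2 False i by simp
        moreover have "p + int (i - m) = p - int m + int i" using F2 by simp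
        ultimately show ?thesis using i(3) by (metis order_trans)
      qed
    qed
  qed
  have "y (p + int i0) \<le> y j" for j
  proof (cases "j \<ge> p")
    case True
    then show ?thesis using R[of "nat (j - p)"] by simp
  next
    case False
    then show ?thesis using Lf[of "nat (p - j)"] by simp
  qed
  then show ?thesis using i0 by blast
qed


lemma in_V:
  fixes l :: int
  assumes "0 \<le> l" "l \<le> int M"
  shows "real_of_int l \<in> {real_of_int jj + real_of_int i / real (2 * n + 2) | jj i.
                          0 \<le> jj \<and> jj < int M \<and> 0 \<le> i \<and> i \<le> int (2 * n + 2)}"
proof (cases "l < int M")
  case True
  then show ?thesis using assms by (intro CollectI exI[of _ l] exI[of _ 0]) simp
next
  case False
  then have l: "l = int M" using assms by simp
  have "real_of_int l = real_of_int (int M - 1) + real_of_int (int (2 * n + 2)) / real (2 * n + 2)"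
    using l by simp
  then show ?thesis using l M1
    by (intro CollectI exI[of _ "int M - 1"] exI[of _ "int (2 * n + 2)"]) simp
qed

lemma finish:
  assumes u: "trop_satisfies n a u" and v: "trop_satisfies n a v"
    and ru: "\<And>j. L \<le> u j \<and> u j \<le> L + real M"
    and rv: "\<And>j. L \<le> v j \<and> v j \<le> L + real M"
    and ag: "(\<forall>j<p. u j = v j) \<or> (\<forall>j\<ge>p. u j = v j)"
    and q: "u q \<noteq> v q"
  shows "\<exists>y. trop_satisfies n a y \<and> \<not> periodic_seq y \<and>
           (\<forall>j. y j \<in> {real_of_int jj + real_of_int i / real (2 * n + 2) | jj i.
                          0 \<le> jj \<and> jj < int M \<and> 0 \<le> i \<and> i \<le> int (2 * n + 2)})"
proof -
  define P where "P = min (u q) (v q)"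
  define c where "c = P - real_of_int \<lfloor>P - L\<rfloor>"
  define r where "r = (\<lambda>x::real. real_of_int \<lceil>x - c\<rceil>)"
  have c1: "L \<le> c" "c < L + 1" unfolding c_def by linarith+
  have mono_r: "mono r" unfolding r_def mono_def by (simp add: ceiling_mono)
  have cr: "r (real_of_int (a i) + x) = real_of_int (a i) + r x" for i x
  proof -
    have "\<lceil>real_of_int (a i) + x - c\<rceil> = a i + \<lceil>x - c\<rceil>"
      using ceiling_add_of_int[of "x - c" "a i"] by (simp add: algebra_simps)
    then show ?thesis unfolding r_def by simp
  qed
  have rng: "\<exists>l. 0 \<le> l \<and> l \<le> int M \<and> r x = real_of_int l" if "L \<le> x" "x \<le> L + real M" for x
  proof -
    have "0 \<le> \<lceil>x - c\<rceil>" using that c1 by simp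
    moreover have "\<lceil>x - c\<rceil> \<le> int M" using that c1 by (simp add: ceiling_le_iff)
    ultimately show ?thesis unfolding r_def by blast
  qed
  have sep: "r (u q) \<noteq> r (v q)"
  proof -
    have rP: "r P = real_of_int \<lfloor>P - L\<rfloor>" unfolding r_def c_def by simp
    have gt: "r Q > r P" if "Q > P" for Q
    proof -
      have "Q - c > real_of_int \<lfloor>P - L\<rfloor>" using that unfolding c_def by simp
      then have "\<lceil>Q - c\<rceil> > \<lfloor>P - L\<rfloor>" by (simp add: less_ceiling_iff)
      then show ?thesis using rP unfolding r_def by simp
    qed
    show ?thesis
    proof (cases "u q < v q")
      case True then show ?thesis using gt[of "v q"] unfolding P_def by simp
    next
      case False
      then have "v q < u q" using q by simp
      then show ?thesis using gt[of "u q"] unfolding P_def by simp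
    qed
  qed
  define w1 where "w1 = (\<lambda>j. r (u j))"
  define w2 where "w2 = (\<lambda>j. r (v j))"
  have s1: "trop_satisfies n a w1" unfolding w1_def by (rule sat_comp[OF mono_r cr u])
  have s2: "trop_satisfies n a w2" unfolding w2_def by (rule sat_comp[OF mono_r cr v])
  have V1: "\<forall>j. w1 j \<in> {real_of_int jj + real_of_int i / real (2 * n + 2) | jj i.
                          0 \<le> jj \<and> jj < int M \<and> 0 \<le> i \<and> i \<le> int (2 * n + 2)}"
  proof
    fix j
    obtain l where "0 \<le> l" "l \<le> int M" "r (u j) = real_of_int l" using rng ru by blast
    then show "w1 j \<in> {real_of_int jj + real_of_int i / real (2 * n + 2) | jj i.
                          0 \<le> jj \<and> jj < int M \<and> 0 \<le> i \<and> i \<le> int (2 * n + 2)}"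
      using in_V unfolding w1_def by simp
  qed
  have V2: "\<forall>j. w2 j \<in> {real_of_int jj + real_of_int i / real (2 * n + 2) | jj i.
                          0 \<le> jj \<and> jj < int M \<and> 0 \<le> i \<and> i \<le> int (2 * n + 2)}"
  proof
    fix j
    obtain l where "0 \<le> l" "l \<le> int M" "r (v j) = real_of_int l" using rng rv by blast
    then show "w2 j \<in> {real_of_int jj + real_of_int i / real (2 * n + 2) | jj i.
                          0 \<le> jj \<and> jj < int M \<and> 0 \<le> i \<and> i \<le> int (2 * n + 2)}"
      using in_V unfolding w2_def by simp
  qed
  have ag2: "(\<forall>j<p. w1 j = w2 j) \<or> (\<forall>j\<ge>p. w1 j = w2 j)"
    using ag unfolding w1_def w2_def by auto
  have "\<not> (periodic_seq w1 \<and> periodic_seq w2)"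
    using periodic_eq[OF _ _ ag2, of q] sep unfolding w1_def w2_def by auto
  then show ?thesis using s1 s2 V1 V2 by blast
qed

lemma from_two:
  assumes u: "trop_satisfies n a u" and v: "trop_satisfies n a v"
    and ru: "\<And>j. L \<le> u j \<and> u j \<le> L + real M"
    and rv: "\<And>j. L \<le> v j \<and> v j \<le> L + real M"
    and ag: "\<And>i. i < n \<Longrightarrow> u (p + int i) = v (p + int i)"
    and q: "u q \<noteq> v q"
  shows "\<exists>y. trop_satisfies n a y \<and> \<not> periodic_seq y \<and>
           (\<forall>j. y j \<in> {real_of_int jj + real_of_int i / real (2 * n + 2) | jj i.
                          0 \<le> jj \<and> jj < int M \<and> 0 \<le> i \<and> i \<le> int (2 * n + 2)})"
proof -
  define s where "s = (\<lambda>j. if j < p then u j else v j)"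
  have ss: "trop_satisfies n a s" unfolding s_def by (rule sat_splice[OF u v ag])
  have rs: "L \<le> s j \<and> s j \<le> L + real M" for j unfolding s_def using ru rv by auto
  show ?thesis
  proof (cases "p \<le> q")
    case True
    show ?thesis
      by (rule finish[OF u ss ru rs, of p q]) (use True q in \<open>auto simp: s_def\<close>)
  next
    case False
    show ?thesis
      by (rule finish[OF v ss rv rs, of p q]) (use False q in \<open>auto simp: s_def\<close>)
  qed
qed


lemma main:
  assumes s: "trop_satisfies n a y" and mn: "trop_minimal n a y" and np: "\<not> periodic_seq y"
  shows "\<exists>y. trop_satisfies n a y \<and> \<not> periodic_seq y \<and>
           (\<forall>j. y j \<in> {real_of_int jj + real_of_int i / real (2 * n + 2) | jj i.
                          0 \<le> jj \<and> jj < int M \<and> 0 \<le> i \<and> i \<le> int (2 * n + 2)})"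
proof -
  obtain i0 where i0: "i0 < n" "\<forall>j. y (0 + int i0) \<le> y j" using block_min[OF s, of 0] by blast
  define L where "L = y (int i0)"
  have lo: "L \<le> y j" for j using i0 unfolding L_def by simp
  have hi: "y j \<le> L + real M" for j
  proof -
    obtain k where k: "j - int n \<le> k" "k \<le> j"
      "real_of_int (a (nat (j - k))) + y j = trop_min n a y k"
      using mn unfolding trop_minimal_def by blast
    obtain i where i: "i < n" "\<forall>j. y (k + int i) \<le> y j" using block_min[OF s, of k] by blast
    have "trop_min n a y k \<le> real_of_int (a i) + y (int i + k)" by (rule tmin_le) (use i in simp)
    moreover have "a i \<le> int M" using aM i by auto
    moreover have "y (int i + k) \<le> L" using i(2) by (simp add: add.commute L_def)
    moreover have "a (nat (j - k)) \<ge> 0" using aM k by auto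
    ultimately show ?thesis using k(3) by linarith
  qed
  have r0: "L \<le> y j \<and> y j \<le> L + real M" for j using lo hi by simp
  show ?thesis
  proof (cases "\<exists>q. rnd n y (y q) \<noteq> y q")
    case True
    then obtain q where q: "rnd n y (y q) \<noteq> y q" by blast
    have sv: "trop_satisfies n a (\<lambda>j. rnd n y (y j))"
      by (rule sat_comp[OF rnd_mono[OF n1] _ s]) (simp add: rnd_add[OF n1])
    have rv: "L \<le> rnd n y (y j) \<and> rnd n y (y j) \<le> L + real M" for j
    proof
      have "rnd n y L \<le> rnd n y (y j)" using rnd_mono[OF n1] lo by (simp add: mono_def)
      then show "L \<le> rnd n y (y j)" unfolding L_def using rnd_fix[OF n1 i0(1)] by simp
      show "rnd n y (y j) \<le> L + real M" using rnd_le[OF n1] hi order_trans by blast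
    qed
    show ?thesis
      by (rule from_two[OF s sv r0 rv, of 0 q]) (use q rnd_fix[OF n1] in auto)
  next
    case False
    then have fx: "rnd n y (y q) = y q" for q by blast
    define Y where "Y = (\<lambda>(i, z). y (int i) + real_of_int z) ` ({..<n} \<times> {- int M..int M})"
    have finY: "finite Y" unfolding Y_def by simp
    have inY: "y j \<in> Y" for j
    proof -
      obtain i z where iz: "i < n" "y j = y (int i) + real_of_int z" using rnd_eq[OF n1 fx[of j]] by blast
      have "real_of_int z \<le> real M" "- real M \<le> real_of_int z" using r0[of j] r0[of "int i"] iz by linarith+
      then have "z \<in> {- int M..int M}" by simp
      then show ?thesis unfolding Y_def using iz by force
    qed
    define \<beta> where "\<beta> = (\<lambda>m::nat. map (\<lambda>i. y (int m + int i)) [0..<n])"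
    have "range \<beta> \<subseteq> {xs. set xs \<subseteq> Y \<and> length xs = n}" unfolding \<beta>_def using inY by auto
    moreover have "finite {xs. set xs \<subseteq> Y \<and> length xs = n}" using finY by (rule finite_lists_length_eq)
    ultimately have "finite (range \<beta>)" by (rule finite_subset)
    then have "\<not> inj \<beta>" using finite_imageD by blast
    then obtain m1 m2 where mm: "m1 \<noteq> m2" "\<beta> m1 = \<beta> m2" unfolding inj_def by blast
    have "\<exists>m1 m2. m1 < m2 \<and> \<beta> m1 = \<beta> m2"
    proof (cases "m1 < m2")
      case True then show ?thesis using mm by blast
    next
      case False then have "m2 < m1" using mm by simp
      then show ?thesis using mm by metis
    qed
    then obtain m1 m2 where mm: "m1 < m2" "\<beta> m1 = \<beta> m2" by blast
    define d where "d = int m2 - int m1"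
    have d1: "d \<ge> 1" unfolding d_def using mm by simp
    obtain q where q: "y (q + d) \<noteq> y q" using np d1 unfolding periodic_seq_def by blast
    have sv: "trop_satisfies n a (\<lambda>j. y (j + d))" by (rule sat_shift[OF s])
    have ag: "y (int m1 + int i) = y (int m1 + int i + d)" if "i < n" for i
    proof -
      have "\<beta> m1 ! i = \<beta> m2 ! i" using mm by simp
      then have "y (int m1 + int i) = y (int m2 + int i)" unfolding \<beta>_def using that by simp
      moreover have "int m2 + int i = int m1 + int i + d" unfolding d_def by simp
      ultimately show ?thesis by simp
    qed
    show ?thesis
      by (rule from_two[OF s sv r0 r0, of "int m1" q]) (use ag q in auto)
  qed
qed

end

theorem lemma4:
  fixes n M :: nat and a :: "nat \<Rightarrow> int"
  assumes "n \<ge> 1" and "M \<ge> 1"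
    and "\<forall>i\<le>n. 0 \<le> a i \<and> a i \<le> int M"
    and "a 0 = 0" and "a n = 0"
    and "\<exists>y. trop_satisfies n a y \<and> trop_minimal n a y \<and> \<not> periodic_seq y"
  shows "\<exists>y. trop_satisfies n a y \<and> \<not> periodic_seq y \<and>
           (\<forall>j. y j \<in> {real_of_int jj + real_of_int i / real (2 * n + 2) | jj i.
                          0 \<le> jj \<and> jj < int M \<and> 0 \<le> i \<and> i \<le> int (2 * n + 2)})"
proof -
  interpret tr n M a using assms(1-5) by unfold_locales
  show ?thesis using assms(6) main by blast
qed

end
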